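(* Let the lattice be one of the standard lattices D2Q9, D3Q19 or D3Q27 (velocities $\boldsymbol{e}_i$, weights $w_i$, $c_s^2=c^2/3$, as described in the context), and let the symmetric subspace admit the orthogonal decomposition $\mathcal{S}=\mathcal{S}^{(0)}\oplus\mathcal{S}^{(2)}\oplus\mathcal{S}^{(G)}$, where $\mathcal{S}^{(G)}$ is spanned by the vectors $(w_i\phi^{(G)}_{i,k})_i$, $k=1,\dots,N_G$, for mutually orthogonal ghost functions $\phi^{(G)}_{\cdot,k}$ (i.e. $\sum_i w_i\phi^{(G)}_{i,k}\phi^{(G)}_{i,l}=0$ for $k\neq l$). Let $f^{\mathrm{neq}}\in\mathbb{R}^Q$ satisfy mass conservation $\sum_i f_i^{\mathrm{neq}}=0$. Then for every $i$, $$ w_i\frac{\mathcal{H}^{(2)}_{i,\alpha\beta}}{2c_s^4}\mathcal{A}^{\mathrm{neq}}_{\alpha\beta} \;=\; f_i^{\mathrm{neq},+}-(\hat P^{(G)}f^{\mathrm{neq}})_i, $$ where $\mathcal{A}^{\mathrm{neq}}_{\alpha\beta}=\sum_j \mathcal{H}^{(2)}_{j,\alpha\beta}f_j^{\mathrm{neq}}$ (summation over repeated Greek indices), $f_i^{\mathrm{neq},+}=\tfrac12(f_i^{\mathrm{neq}}+f_{\bar i}^{\mathrm{neq}})$, and $$(\hat P^{(G)}f^{\mathrm{neq}})_i=\sum_{k=1}^{N_G}\frac{w_i\,\phi^{(G)}_{i,k}}{N^{(\phi)}_{G,k}}\sum_j\phi^{(G)}_{j,k}f_j^{\mathrm{neq}},\qquad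 N^{(\phi)}_{G,k}=\sum_j w_j\big(\phi^{(G)}_{j,k}\big)^2.$$
   Context: Lattices (lattice speed $c>0$, $c_s^2=c^2/3$): D2Q9 has velocities $0$, $(\pm c,0)$, $(0,\pm c)$ with weights $4/9,1/9$ and $(\pm c,\pm c)$ with weight $1/36$; D3Q19 has the rest velocity (weight $1/3$), the 6 axial velocities $\pm c\,\boldsymbol{\hat e}_\alpha$ (weight $1/18$) and the 12 face-diagonal velocities with two components $\pm c$ and one $0$ (weight $1/36$); D3Q27 has the rest velocity (weight $8/27$), axial (weight $2/27$), face-diagonal (weight $1/54$) and the 8 body-diagonal velocities $(\pm c,\pm c,\pm c)$ (weight $1/216$). $Q$ is the number of velocities, $D$ the dimension. For each $i$, $\bar i$ denotes the index with $\boldsymbol{e}_{\bar i}=-\boldsymbol{e}_i$ (so $w_{\bar i}=w_i$). Hermite tensors: $\mathcal{H}^{(2)}_{i,\alpha\beta}=e_{i\alpha}e_{i\beta}-c_s^2\delta_{\alpha\beta}$. The space $\mathbb{R}^Q$ carries the inner product $\langle f,g\rangle=\sum_i f_ig_i/w_i$. The symmetric subspace is $\mathcal{S}=\{f: f_i=f_{\bar i}\ \forall i\}$. $\mathcal{S}^{(0)}=\mathrm{span}\{(w_i)_i\}$, $\mathcal{S}^{(2)}=\mathrm{span}\{(w_i\mathcal{H}^{(2)}_{i,\alpha\beta})_i:\alpha,\beta\}$, and $\mathcal{S}^{(G)}$ is the "ghost" subspace spanned by $(w_i\phi^{(G)}_{i,k})_i$ with $\phi^{(G)}_{\cdot,k}$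 even under inversion. The decomposition hypothesis means these three subspaces are mutually orthogonal for $\langle\cdot,\cdot\rangle$ and their direct sum is $\mathcal{S}$. (For D2Q9, $N_G=1$ and $\phi^{(G)}_i=(e_{ix}^2-c_s^2)(e_{iy}^2-c_s^2)$.) *)

theory Defs
  imports Main "HOL.Real"
begin

datatype lattice = D2Q9 | D3Q19 | D3Q27

fun ldim :: "lattice \<Rightarrow> nat" where
  "ldim D2Q9 = 2" | "ldim D3Q19 = 3" | "ldim D3Q27 = 3"

definition nnz :: "int list \<Rightarrow> nat" where
  "nnz v = length (filter (\<lambda>x. x \<noteq> 0) v)"

fun lvels :: "lattice \<Rightarrow> int list list" where
  "lvels D2Q9 = [[a, b]. a \<leftarrow> [-1, 0, 1], b \<leftarrow> [-1, 0, 1]]"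
| "lvels D3Q19 = filter (\<lambda>v. nnz v \<le> 2)
      [[a, b, d]. a \<leftarrow> [-1, 0, 1], b \<leftarrow> [-1, 0, 1], d \<leftarrow> [-1, 0, 1]]"
| "lvels D3Q27 = [[a, b, d]. a \<leftarrow> [-1, 0, 1], b \<leftarrow> [-1, 0, 1], d \<leftarrow> [-1, 0, 1]]"

fun wclass :: "lattice \<Rightarrow> nat \<Rightarrow> real" where
  "wclass D2Q9 n = (if n = 0 then 4/9 else if n = 1 then 1/9 else 1/36)"
| "wclass D3Q19 n = (if n = 0 then 1/3 else if n = 1 then 1/18 else 1/36)"
| "wclass D3Q27 n = (if n = 0 then 8/27 else if n = 1 then 2/27 else if n = 2 then 1/54 else 1/216)"

definition lQ :: "lattice \<Rightarrow> nat" where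
  "lQ L = length (lvels L)"

definition vel :: "lattice \<Rightarrow> real \<Rightarrow> nat \<Rightarrow> nat \<Rightarrow> real" where
  "vel L c i \<alpha> = c * of_int (lvels L ! i ! \<alpha>)"

definition wt :: "lattice \<Rightarrow> nat \<Rightarrow> real" where
  "wt L i = wclass L (nnz (lvels L ! i))"

definition opp :: "lattice \<Rightarrow> nat \<Rightarrow> nat" where
  "opp L i = (THE j. j < lQ L \<and> lvels L ! j = map uminus (lvels L ! i))"

definition cs2 :: "real \<Rightarrow> real" where
  "cs2 c = c^2 / 3"

definition H2 :: "lattice \<Rightarrow> real \<Rightarrow> nat \<Rightarrow> nat \<Rightarrow> nat \<Rightarrow> real" where
  "H2 L c i \<alpha> \<beta> = vel L c i \<alpha> * vel L c i \<beta> - cs2 c * (if \<alpha> = \<beta> then 1 else 0)"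

text \<open>Vectors in \<open>\<real>^Q\<close> are represented as \<open>nat \<Rightarrow> real\<close>; only entries \<open>i < Q\<close> matter.\<close>
definition winner :: "lattice \<Rightarrow> (nat \<Rightarrow> real) \<Rightarrow> (nat \<Rightarrow> real) \<Rightarrow> real" where
  "winner L f g = (\<Sum>i<lQ L. f i * g i / wt L i)"

definition symS :: "lattice \<Rightarrow> (nat \<Rightarrow> real) set" where
  "symS L = {f. \<forall>i<lQ L. f i = f (opp L i)}"

definition S0 :: "lattice \<Rightarrow> (nat \<Rightarrow> real) set" where
  "S0 L = {f. \<exists>a::real. \<forall>i<lQ L. f i = a * wt L i}"

definition S2 :: "lattice \<Rightarrow> real \<Rightarrow> (nat \<Rightarrow> real) set" where
  "S2 L c = {f. \<exists>A :: nat \<Rightarrow> nat \<Rightarrow> real. \<forall>i<lQ L.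
      f i = (\<Sum>\<alpha><ldim L. \<Sum>\<beta><ldim L. A \<alpha> \<beta> * (wt L i * H2 L c i \<alpha> \<beta>))}"

text \<open>Ghost subspace spanned by \<open>(w_i \<phi>_{i,k})_i\<close>, \<open>k < N_G\<close> (0-based index k).\<close>
definition SG :: "lattice \<Rightarrow> nat \<Rightarrow> (nat \<Rightarrow> nat \<Rightarrow> real) \<Rightarrow> (nat \<Rightarrow> real) set" where
  "SG L NG \<phi> = {f. \<exists>b :: nat \<Rightarrow> real. \<forall>i<lQ L.
      f i = (\<Sum>k<NG. b k * (wt L i * \<phi> k i))}"

definition orth_sets :: "lattice \<Rightarrow> (nat \<Rightarrow> real) set \<Rightarrow> (nat \<Rightarrow> real) set \<Rightarrow> bool" where
  "orth_sets L A B = (\<forall>f\<in>A. \<forall>g\<in>B. winner L f g = 0)"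

text \<open>Decomposition hypothesis: \<open>S^{(0)}, S^{(2)}, S^{(G)}\<close> mutually orthogonal and
  their sum equals the symmetric subspace \<open>S\<close> (directness follows from orthogonality).\<close>
definition decomposition_hyp :: "lattice \<Rightarrow> real \<Rightarrow> nat \<Rightarrow> (nat \<Rightarrow> nat \<Rightarrow> real) \<Rightarrow> bool" where
  "decomposition_hyp L c NG \<phi> \<longleftrightarrow>
     orth_sets L (S0 L) (S2 L c) \<and> orth_sets L (S0 L) (SG L NG \<phi>) \<and>
     orth_sets L (S2 L c) (SG L NG \<phi>) \<and>
     (\<forall>f. f \<in> symS L \<longleftrightarrow>
        (\<exists>g0\<in>S0 L. \<exists>g2\<in>S2 L c. \<exists>gG\<in>SG L NG \<phi>. \<forall>i<lQ L. f i = g0 i + g2 i + gG i))"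

definition Aneq :: "lattice \<Rightarrow> real \<Rightarrow> (nat \<Rightarrow> real) \<Rightarrow> nat \<Rightarrow> nat \<Rightarrow> real" where
  "Aneq L c f \<alpha> \<beta> = (\<Sum>j<lQ L. H2 L c j \<alpha> \<beta> * f j)"

definition fplus :: "lattice \<Rightarrow> (nat \<Rightarrow> real) \<Rightarrow> nat \<Rightarrow> real" where
  "fplus L f i = (f i + f (opp L i)) / 2"

definition NGnorm :: "lattice \<Rightarrow> (nat \<Rightarrow> nat \<Rightarrow> real) \<Rightarrow> nat \<Rightarrow> real" where
  "NGnorm L \<phi> k = (\<Sum>j<lQ L. wt L j * (\<phi> k j)^2)"

definition PG :: "lattice \<Rightarrow> nat \<Rightarrow> (nat \<Rightarrow> nat \<Rightarrow> real) \<Rightarrow> (nat \<Rightarrow> real) \<Rightarrow> nat \<Rightarrow> real" where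
  "PG L NG \<phi> f i = (\<Sum>k<NG. (wt L i * \<phi> k i / NGnorm L \<phi> k) * (\<Sum>j<lQ L. \<phi> k j * f j))"

end

theory Submission imports Defs begin
definition dl :: "nat \<Rightarrow> nat \<Rightarrow> real" where "dl a b = (if a = b then 1 else 0)"
definition M4 where "M4 L a b g d = sum_list (map (\<lambda>v. wclass L (nnz v) * (real_of_int (v!a*v!b) - dl a b/3) * (real_of_int (v!g*v!d) - dl g d/3)) (lvels L))"
lemma l27: "lvels D3Q27 = [[-1,-1,-1],[-1,-1,0],[-1,-1,1],[-1,0,-1],[-1,0,0],[-1,0,1],[-1,1,-1],[-1,1,0],[-1,1,1],
 [0,-1,-1],[0,-1,0],[0,-1,1],[0,0,-1],[0,0,0],[0,0,1],[0,1,-1],[0,1,0],[0,1,1],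
 [1,-1,-1],[1,-1,0],[1,-1,1],[1,0,-1],[1,0,0],[1,0,1],[1,1,-1],[1,1,0],[1,1,1]]" by simp
lemma l19: "lvels D3Q19 = [[-1,-1,0],[-1,0,-1],[-1,0,0],[-1,0,1],[-1,1,0],
 [0,-1,-1],[0,-1,0],[0,-1,1],[0,0,-1],[0,0,0],[0,0,1],[0,1,-1],[0,1,0],[0,1,1],
 [1,-1,0],[1,0,-1],[1,0,0],[1,0,1],[1,1,0]]" by (simp add: nnz_def)
lemma l9: "lvels D2Q9 = [[-1,-1],[-1,0],[-1,1],[0,-1],[0,0],[0,1],[1,-1],[1,0],[1,1]]" by simp
lemma m27: "\<forall>a\<in>{0,1,2}. \<forall>b\<in>{0,1,2}. \<forall>g\<in>{0,1,2}. \<forall>d\<in>{0,1,2}. M4 D3Q27 a b g d = (dl a g * dl b d + dl a d * dl b g)/9"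
  unfolding M4_def l27 by (simp add: nnz_def dl_def)
lemma m19: "\<forall>a\<in>{0,1,2}. \<forall>b\<in>{0,1,2}. \<forall>g\<in>{0,1,2}. \<forall>d\<in>{0,1,2}. M4 D3Q19 a b g d = (dl a g * dl b d + dl a d * dl b g)/9"
  unfolding M4_def l19 by (simp add: nnz_def dl_def)
lemma m9: "\<forall>a\<in>{0,1}. \<forall>b\<in>{0,1}. \<forall>g\<in>{0,1}. \<forall>d\<in>{0,1}. M4 D2Q9 a b g d = (dl a g * dl b d + dl a d * dl b g)/9"
  unfolding M4_def l9 by (simp add: nnz_def dl_def)

lemma lt3: "(a::nat) < 3 \<Longrightarrow> a \<in> {0,1,2}" by auto
lemma lt2: "(a::nat) < 2 \<Longrightarrow> a \<in> {0,1}" by auto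

lemma M4_val: assumes "a < ldim L" "b < ldim L" "g < ldim L" "d < ldim L"
  shows "M4 L a b g d = (dl a g * dl b d + dl a d * dl b g)/9"
proof (cases L)
  case D2Q9 then show ?thesis using assms m9 lt2[of a] lt2[of b] lt2[of g] lt2[of d] by (simp only: ldim.simps; blast)
next
  case D3Q19 then show ?thesis using assms m19 lt3[of a] lt3[of b] lt3[of g] lt3[of d] by (simp only: ldim.simps; blast)
next
  case D3Q27 then show ?thesis using assms m27 lt3[of a] lt3[of b] lt3[of g] lt3[of d] by (simp only: ldim.simps; blast)
qed

lemma sum_conv: "(\<Sum>i<length xs. g (xs!i)) = sum_list (map g xs)"
  by (simp add: sum_list_sum_nth atLeast0LessThan)

lemma rev_l: "rev (lvels L) = map (map uminus) (lvels L)"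
  by (cases L) (simp_all add: nnz_def)
lemma dist_l: "distinct (lvels L)"
  by (cases L) (simp_all add: nnz_def)
lemma len_l: "\<forall>v \<in> set (lvels L). length v = ldim L"
  by (cases L) (auto simp: nnz_def)

lemma sumw: "(\<Sum>i<lQ L. wt L i) = 1"
proof -
  have "(\<Sum>i<lQ L. wt L i) = sum_list (map (\<lambda>v. wclass L (nnz v)) (lvels L))"
    unfolding lQ_def wt_def by (rule sum_conv)
  also have "\<dots> = 1" by (cases L) (simp_all add: nnz_def)
  finally show ?thesis .
qed

lemma wpos: "wt L i > 0"
  unfolding wt_def by (cases L) auto

lemma opp_eq: assumes "i < lQ L" shows "opp L i = lQ L - Suc i"
proof -
  let ?xs = "lvels L"
  have len: "length ?xs = lQ L" by (simp add: lQ_def)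
  have key: "?xs ! (lQ L - Suc i) = map uminus (?xs ! i)"
  proof -
    have "rev ?xs ! i = ?xs ! (lQ L - Suc i)" using assms len by (simp add: rev_nth)
    moreover have "rev ?xs ! i = map uminus (?xs ! i)" using assms len by (simp add: rev_l)
    ultimately show ?thesis by simp
  qed
  show ?thesis unfolding opp_def
  proof (rule the_equality)
    show "lQ L - Suc i < lQ L \<and> ?xs ! (lQ L - Suc i) = map uminus (?xs ! i)" using assms key by simp
  next
    fix j assume "j < lQ L \<and> ?xs ! j = map uminus (?xs ! i)"
    then have "j < lQ L" "?xs ! j = ?xs ! (lQ L - Suc i)" using key by auto
    then show "j = lQ L - Suc i" using dist_l[of L] len assms
      by (simp add: nth_eq_iff_index_eq)
  qed
qed

lemma opp_lt: "i < lQ L \<Longrightarrow> opp L i < lQ L" by (simp add: opp_eq)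
lemma opp_opp: "i < lQ L \<Longrightarrow> opp L (opp L i) = i" by (simp add: opp_eq)

lemma opp_vec: assumes "i < lQ L" shows "lvels L ! (opp L i) = map uminus (lvels L ! i)"
proof -
  have len: "length (lvels L) = lQ L" by (simp add: lQ_def)
  have "rev (lvels L) ! i = lvels L ! (lQ L - Suc i)" using assms len by (simp add: rev_nth)
  moreover have "rev (lvels L) ! i = map uminus (lvels L ! i)" using assms len by (simp add: rev_l)
  ultimately show ?thesis using assms by (simp add: opp_eq)
qed

lemma vlen: "i < lQ L \<Longrightarrow> length (lvels L ! i) = ldim L"
  using len_l[of L] by (simp add: lQ_def)

lemma H2_opp: assumes "i < lQ L" "a < ldim L" "b < ldim L"
  shows "H2 L c (opp L i) a b = H2 L c i a b"
  using assms by (simp add: H2_def vel_def opp_vec vlen)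

lemma sum_opp: "(\<Sum>i<lQ L. g (opp L i)) = (\<Sum>i<lQ L. g i)"
proof -
  have "(\<Sum>i<lQ L. g (opp L i)) = (\<Sum>i<lQ L. g (lQ L - Suc i))"
    by (rule sum.cong) (simp_all add: opp_eq)
  also have "\<dots> = (\<Sum>i<lQ L. g i)" by (rule sum.nat_diff_reindex)
  finally show ?thesis .
qed

lemma mom4: assumes "a < ldim L" "b < ldim L" "g < ldim L" "d < ldim L"
  shows "(\<Sum>i<lQ L. wt L i * H2 L c i a b * H2 L c i g d) = (cs2 c)^2 * (dl a g * dl b d + dl a d * dl b g)"
proof -
  have "(\<Sum>i<lQ L. wt L i * H2 L c i a b * H2 L c i g d)
     = (\<Sum>i<length (lvels L). (\<lambda>v. c^4 * (wclass L (nnz v) * (real_of_int (v!a*v!b) - dl a b/3) * (real_of_int (v!g*v!d) - dl g d/3))) (lvels L ! i))"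
    unfolding lQ_def
  proof (rule sum.cong)
    fix i
    show "wt L i * H2 L c i a b * H2 L c i g d = c^4 * (wclass L (nnz (lvels L ! i)) * (real_of_int (lvels L ! i!a*lvels L ! i!b) - dl a b/3) * (real_of_int (lvels L ! i!g*lvels L ! i!d) - dl g d/3))"
      unfolding wt_def H2_def vel_def cs2_def dl_def of_int_mult
      by (simp add: algebra_simps power4_eq_xxxx power2_eq_square)
  qed simp
  also have "\<dots> = c^4 * M4 L a b g d" unfolding M4_def sum_conv[symmetric] sum_distrib_left by (simp add: of_int_mult)
  also have "\<dots> = (cs2 c)^2 * (dl a g * dl b d + dl a d * dl b g)" using M4_val[OF assms]
    by (simp add: cs2_def power2_eq_square power4_eq_xxxx)
  finally show ?thesis .
qed


lemma dlsplit: "(a::real) * (k * (dl x g * dl y d + dl x d * dl y g)) =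
  k * ((if x = g \<and> y = d then 1 else 0) * a) + k * ((if x = d \<and> y = g then 1 else 0) * a)"
  unfolding dl_def by (cases "x = g"; cases "y = d"; cases "x = d"; cases "y = g") simp_all

lemma H2_sym: "H2 L c i a b = H2 L c i b a"
  unfolding H2_def by (auto simp: mult.commute)

lemma delta1: "l < (n::nat) \<Longrightarrow> (\<Sum>k<n. (if k = l then 1 else 0) * (X k::real)) = X l"
proof -
  assume "l < n"
  have "(\<Sum>k<n. (if k = l then 1 else 0) * (X k::real)) = (\<Sum>k<n. if k = l then X k else 0)"
    by (rule sum.cong) auto
  then show ?thesis using \<open>l < n\<close> by (simp add: sum.delta)
qed

lemma delta2: assumes "g < (n::nat)" "d < n"
  shows "(\<Sum>x<n. \<Sum>y<n. (if x = g \<and> y = d then 1 else 0) * (X x y::real)) = X g d"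
proof -
  have "(\<Sum>x<n. \<Sum>y<n. (if x = g \<and> y = d then 1 else 0) * (X x y::real))
     = (\<Sum>x<n. (if x = g then 1 else 0) * X x d)"
  proof (rule sum.cong)
    fix x show "(\<Sum>y<n. (if x = g \<and> y = d then 1 else 0) * X x y) = (if x = g then 1 else 0) * X x d"
      using delta1[OF assms(2), of "X x"] by (cases "x = g") simp_all
  qed simp
  then show ?thesis using delta1[OF assms(1)] by simp
qed

lemma winner_comm: "winner L f g = winner L g f"
  unfolding winner_def by (simp add: mult.commute)

lemma winner_cong: "(\<And>i. i < lQ L \<Longrightarrow> p i = q i) \<Longrightarrow> winner L p h = winner L q h"
  unfolding winner_def by (rule sum.cong) auto

lemma winner_add3: "winner L (\<lambda>i. p i + q i + r i) h = winner L p h + winner L q h + winner L r h"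
  unfolding winner_def by (simp add: sum.distrib ring_distribs add_divide_distrib)

lemma winner_w: "winner L p (\<lambda>i. wt L i * h i) = (\<Sum>i<lQ L. p i * h i)"
  unfolding winner_def using wpos[of L] by (intro sum.cong) (auto simp: field_simps less_imp_neq[symmetric])

theorem theorem1:
  fixes L :: lattice and c :: real and NG :: nat
    and \<phi> :: "nat \<Rightarrow> nat \<Rightarrow> real" and f :: "nat \<Rightarrow> real"
  assumes c_pos: "c > 0"
    and ghost_even: "\<forall>k<NG. \<forall>i<lQ L. \<phi> k (opp L i) = \<phi> k i"
    and ghost_orth: "\<forall>k<NG. \<forall>l<NG. k \<noteq> l \<longrightarrow> (\<Sum>i<lQ L. wt L i * \<phi> k i * \<phi> l i) = 0"
    and decomp: "decomposition_hyp L c NG \<phi>"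
    and mass: "(\<Sum>i<lQ L. f i) = 0"
  shows "\<forall>i<lQ L.
    wt L i * (\<Sum>\<alpha><ldim L. \<Sum>\<beta><ldim L. H2 L c i \<alpha> \<beta> / (2 * (cs2 c)^2) * Aneq L c f \<alpha> \<beta>)
      = fplus L f i - PG L NG \<phi> f i"
proof -
  let ?Q = "lQ L" and ?D = "ldim L"
  define fp where "fp = fplus L f"
  have o02: "orth_sets L (S0 L) (S2 L c)" and o0G: "orth_sets L (S0 L) (SG L NG \<phi>)"
    and o2G: "orth_sets L (S2 L c) (SG L NG \<phi>)"
    and dec: "\<And>h. h \<in> symS L \<longleftrightarrow>
        (\<exists>g0\<in>S0 L. \<exists>g2\<in>S2 L c. \<exists>gG\<in>SG L NG \<phi>. \<forall>i<lQ L. h i = g0 i + g2 i + gG i)"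
    using decomp unfolding decomposition_hyp_def by blast+
  have "fp \<in> symS L" unfolding symS_def fp_def fplus_def by (auto simp: opp_opp)
  then obtain g0 g2 gG where g0: "g0 \<in> S0 L" and g2: "g2 \<in> S2 L c" and gG: "gG \<in> SG L NG \<phi>"
    and fpd: "\<forall>i<?Q. fp i = g0 i + g2 i + gG i" using dec by blast
  obtain a where a: "\<forall>i<?Q. g0 i = a * wt L i" using g0 unfolding S0_def by blast
  obtain A where A: "\<forall>i<?Q. g2 i = (\<Sum>\<alpha><?D. \<Sum>\<beta><?D. A \<alpha> \<beta> * (wt L i * H2 L c i \<alpha> \<beta>))"
    using g2 unfolding S2_def by blast
  obtain b where b: "\<forall>i<?Q. gG i = (\<Sum>k<NG. b k * (wt L i * \<phi> k i))"
    using gG unfolding SG_def by blast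
  have split: "winner L fp h = winner L g0 h + winner L g2 h + winner L gG h" for h
    using winner_cong[of L fp "\<lambda>i. g0 i + g2 i + gG i" h] fpd winner_add3 by simp
  have fp_sum: "(\<Sum>i<?Q. fp i * h i) = (\<Sum>i<?Q. f i * h i)" if hev: "\<forall>i<?Q. h (opp L i) = h i" for h
  proof -
    have "(\<Sum>i<?Q. fp i * h i) = ((\<Sum>i<?Q. f i * h i) + (\<Sum>i<?Q. f (opp L i) * h (opp L i)))/2"
      unfolding fp_def fplus_def using hev by (simp add: sum_divide_distrib[symmetric] sum.distrib[symmetric] algebra_simps)
    also have "(\<Sum>i<?Q. f (opp L i) * h (opp L i)) = (\<Sum>i<?Q. f i * h i)"
      by (rule sum_opp)
    finally show ?thesis by simp
  qed
  have wS0: "wt L \<in> S0 L" unfolding S0_def by (rule CollectI, rule exI[of _ 1]) simp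
  have "winner L fp (wt L) = a"
  proof -
    have "winner L g2 (wt L) = 0" using o02 wS0 g2 unfolding orth_sets_def by (subst winner_comm) blast
    moreover have "winner L gG (wt L) = 0" using o0G wS0 gG unfolding orth_sets_def by (subst winner_comm) blast
    moreover have "winner L g0 (wt L) = a"
    proof -
      have "winner L g0 (wt L) = winner L g0 (\<lambda>i. wt L i * 1)" by simp
      also have "\<dots> = (\<Sum>i<?Q. a * wt L i)" unfolding winner_w using a by (intro sum.cong) auto
      also have "\<dots> = a" by (simp add: sum_distrib_left[symmetric] sumw)
      finally show ?thesis .
    qed
    ultimately show ?thesis using split by simp
  qed
  moreover have "winner L fp (wt L) = 0"
  proof -
    have "winner L fp (wt L) = winner L fp (\<lambda>i. wt L i * 1)" by simp
    also have "\<dots> = (\<Sum>i<?Q. f i * 1)" unfolding winner_w by (rule fp_sum) simp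
    finally show ?thesis using mass by simp
  qed
  ultimately have a0: "a = 0" by simp
  have g0z: "winner L g0 h = 0" for h unfolding winner_def using a a0 by simp
  define s where "s l = (\<Sum>j<?Q. \<phi> l j * f j)" for l
  define N where "N l = NGnorm L \<phi> l" for l
  have bN: "b l * N l = s l" if l: "l < NG" for l
  proof -
    let ?h = "\<lambda>i. wt L i * \<phi> l i"
    have hG: "?h \<in> SG L NG \<phi>" unfolding SG_def
      by (rule CollectI, rule exI[of _ "\<lambda>k. if k = l then 1 else 0"]) (simp add: delta1 l)
    have "winner L g2 ?h = 0" using o2G hG g2 unfolding orth_sets_def by blast
    then have "winner L fp ?h = winner L gG ?h" using split g0z by simp
    moreover have "winner L fp ?h = s l" unfolding winner_w s_def
      using fp_sum[of "\<phi> l"] ghost_even l by (simp add: mult.commute)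
    moreover have "winner L gG ?h = b l * N l"
    proof -
      have "winner L gG ?h = (\<Sum>i<?Q. \<Sum>k<NG. b k * (wt L i * \<phi> k i * \<phi> l i))"
        unfolding winner_w using b by (intro sum.cong) (auto simp: sum_distrib_left mult_ac)
      also have "\<dots> = (\<Sum>k<NG. b k * (\<Sum>i<?Q. wt L i * \<phi> k i * \<phi> l i))"
        by (subst sum.swap) (simp add: sum_distrib_left)
      also have "\<dots> = (\<Sum>k<NG. if k = l then b l * N l else 0)"
        using ghost_orth l unfolding N_def NGnorm_def
        by (intro sum.cong) (auto simp: power2_eq_square algebra_simps)
      also have "\<dots> = b l * N l" using l by (simp add: sum.delta)
      finally show ?thesis .
    qed
    ultimately show ?thesis by simp
  qed
  have gGPG: "gG i = PG L NG \<phi> f i" if i: "i < ?Q" for i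
  proof -
    have "gG i = (\<Sum>k<NG. b k * (wt L i * \<phi> k i))" using b i by simp
    also have "\<dots> = PG L NG \<phi> f i" unfolding PG_def
    proof (rule sum.cong)
      fix k assume k: "k \<in> {..<NG}"
      show "b k * (wt L i * \<phi> k i) = wt L i * \<phi> k i / NGnorm L \<phi> k * (\<Sum>j<?Q. \<phi> k j * f j)"
      proof (cases "N k = 0")
        case True
        have "\<forall>j\<in>{..<?Q}. wt L j * (\<phi> k j)^2 = 0"
          using True unfolding N_def NGnorm_def
          by (subst sum_nonneg_eq_0_iff[symmetric]) (auto intro: mult_nonneg_nonneg less_imp_le[OF wpos])
        then have "\<phi> k i = 0" using i wpos[of L i] by force
        then show ?thesis by simp
      next
        case False
        then have "b k = s k / N k" using bN k by (simp add: field_simps)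
        then show ?thesis unfolding s_def N_def by simp
      qed
    qed simp
    finally show ?thesis .
  qed
  have cs: "cs2 c \<noteq> 0" using c_pos by (simp add: cs2_def)
  have AA: "(cs2 c)^2 * (A g d + A d g) = Aneq L c f g d" if gd: "g < ?D" "d < ?D" for g d
  proof -
    let ?h = "\<lambda>i. wt L i * H2 L c i g d"
    have hS: "?h \<in> S2 L c" unfolding S2_def
      by (rule CollectI, rule exI[of _ "\<lambda>x y. if x = g \<and> y = d then 1 else 0"])
        (simp add: delta2 gd)
    have "winner L gG ?h = 0" using o2G hS gG unfolding orth_sets_def by (subst winner_comm) blast
    then have "winner L fp ?h = winner L g2 ?h" using split g0z by simp
    moreover have "winner L fp ?h = Aneq L c f g d" unfolding winner_w Aneq_def
      using fp_sum[of "\<lambda>i. H2 L c i g d"] H2_opp gd by (simp add: mult.commute)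
    moreover have "winner L g2 ?h = (cs2 c)^2 * (A g d + A d g)"
    proof -
      have "winner L g2 ?h = (\<Sum>i<?Q. \<Sum>x<?D. \<Sum>y<?D. A x y * (wt L i * H2 L c i x y * H2 L c i g d))"
        unfolding winner_w using A by (intro sum.cong) (auto simp: sum_distrib_left mult_ac)
      also have "\<dots> = (\<Sum>x<?D. \<Sum>y<?D. A x y * (\<Sum>i<?Q. wt L i * H2 L c i x y * H2 L c i g d))"
        by (subst sum.swap, rule sum.cong, simp, subst sum.swap) (simp add: sum_distrib_left)
      also have "\<dots> = (\<Sum>x<?D. \<Sum>y<?D. A x y * ((cs2 c)^2 * (dl x g * dl y d + dl x d * dl y g)))"
        using gd by (intro sum.cong refl) (simp add: mom4)
      also have "\<dots> = (\<Sum>x<?D. \<Sum>y<?D. (cs2 c)^2 * ((if x = g \<and> y = d then 1 else 0) * A x y)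
            + (cs2 c)^2 * ((if x = d \<and> y = g then 1 else 0) * A x y))"
        by (intro sum.cong refl) (rule dlsplit)
      also have "\<dots> = (cs2 c)^2 * (\<Sum>x<?D. \<Sum>y<?D. (if x = g \<and> y = d then 1 else 0) * A x y)
            + (cs2 c)^2 * (\<Sum>x<?D. \<Sum>y<?D. (if x = d \<and> y = g then 1 else 0) * A x y)"
        by (simp add: sum.distrib sum_distrib_left)
      also have "\<dots> = (cs2 c)^2 * (A g d + A d g)"
        using delta2[OF gd, of A] delta2[OF gd(2) gd(1), of A] by (simp add: algebra_simps)
      finally show ?thesis .
    qed
    ultimately show ?thesis by simp
  qed
  have g2F: "g2 i = wt L i * (\<Sum>\<alpha><?D. \<Sum>\<beta><?D. H2 L c i \<alpha> \<beta> / (2 * (cs2 c)^2) * Aneq L c f \<alpha> \<beta>)"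
    if i: "i < ?Q" for i
  proof -
    define S where "S = (\<Sum>\<alpha><?D. \<Sum>\<beta><?D. H2 L c i \<alpha> \<beta> * A \<alpha> \<beta>)"
    define T where "T = (\<Sum>\<alpha><?D. \<Sum>\<beta><?D. H2 L c i \<alpha> \<beta> * A \<beta> \<alpha>)"
    have e1: "(\<Sum>\<alpha><?D. \<Sum>\<beta><?D. H2 L c i \<alpha> \<beta> / (2 * (cs2 c)^2) * Aneq L c f \<alpha> \<beta>)
      = (\<Sum>\<alpha><?D. \<Sum>\<beta><?D. H2 L c i \<alpha> \<beta> * A \<alpha> \<beta> / 2 + H2 L c i \<alpha> \<beta> * A \<beta> \<alpha> / 2)"
    proof (intro sum.cong refl)
      fix x y assume "x \<in> {..<?D}" "y \<in> {..<?D}"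
      then have "Aneq L c f x y = (cs2 c)^2 * (A x y + A y x)" using AA by simp
      then show "H2 L c i x y / (2 * (cs2 c)^2) * Aneq L c f x y = H2 L c i x y * A x y / 2 + H2 L c i x y * A y x / 2"
        using cs by (simp add: field_simps)
    qed
    have e2: "(\<Sum>\<alpha><?D. \<Sum>\<beta><?D. H2 L c i \<alpha> \<beta> * A \<alpha> \<beta> / 2 + H2 L c i \<alpha> \<beta> * A \<beta> \<alpha> / 2) = S / 2 + T / 2"
      unfolding S_def T_def by (simp only: sum.distrib sum_divide_distrib)
    have e3: "T = S" unfolding S_def T_def
      by (subst sum.swap) (intro sum.cong refl, subst H2_sym, rule refl)
    have e4: "wt L i * S = g2 i" using A i unfolding S_def by (simp add: sum_distrib_left mult_ac)
    show ?thesis using e1 e2 e3 e4 by simp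
  qed
  show ?thesis
  proof (intro allI impI)
    fix i assume i: "i < ?Q"
    have "fplus L f i = g0 i + g2 i + gG i" using fpd i unfolding fp_def by simp
    then show "wt L i * (\<Sum>\<alpha><?D. \<Sum>\<beta><?D. H2 L c i \<alpha> \<beta> / (2 * (cs2 c)^2) * Aneq L c f \<alpha> \<beta>)
      = fplus L f i - PG L NG \<phi> f i"
      using a a0 i g2F gGPG by simp
  qed
qed

end
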